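(* Suppose that $\sup_{u\in[0,1]}\|\Sigma(u)\|_2<\infty$, that $\Sigma(u)$ is positive definite for every $u$, and that $\inf_{u\in[0,1]}\Delta(u)>0$. Let $\hat\mu_1(u),\hat\mu_2(u),\hat\theta(u)$ be any estimators (depending on the sample size $n$) and put $\hat\mu(u)=(\hat\mu_1(u)+\hat\mu_2(u))/2$. If, as $n\to\infty$, $\|\hat\mu_1(u)-\mu_1(u)\|_2=o(1)$, $\|\hat\mu_2(u)-\mu_2(u)\|_2=o(1)$ and $\|\hat\theta(u)-\theta^*(u)\|_2=o(1)$, then for every $u\in[0,1]$, $$|R_n(u)-R(u)|\lesssim \|\hat\theta(u)-\theta^*(u)\|_2^2+\big|(\hat\mu(u)-\mu(u))^\top\beta^*(u)\big|^2 .$$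
   Context: Model: $U\in[0,1]$ is an exposure variable, $Y\in\{0,1\}$ a label independent of $U$ with $\mathbb P(Y=1)=\mathbb P(Y=0)=1/2$, and $X\in\mathbb R^p$ satisfies, conditionally on $U=u$, $X\sim\mathcal N(\mu_1(u),\Sigma(u))$ if $Y=1$ and $X\sim\mathcal N(\mu_2(u),\Sigma(u))$ if $Y=0$. Write $\delta(u)=\mu_1(u)-\mu_2(u)$, $\mu(u)=(\mu_1(u)+\mu_2(u))/2$, $\beta^*(u)=\Sigma(u)^{-1}\delta(u)$, $\Delta(u)=\sqrt{\delta(u)^\top\Sigma(u)^{-1}\delta(u)}$. Let $Z=\mathbb 1(Y=1)-1/2$ and let $\theta^*(u)$ be the minimizer over $\theta\in\mathbb R^p$ of $\mathbb E[(Z-\theta^\top(X-\mu(U)))^2\mid U=u]$ (a positive multiple of $\beta^*(u)$). The oracle risk is $R(u)=\Phi(-\Delta(u)/2)$, where $\Phi$ is the standard normal cdf and $\bar\Phi=1-\Phi$. The conditional misclassification risk of the rule $\mathbb 1\{(x-\hat\mu(u))^\top\hat\theta(u)\ge 0\}$ is $$R_n(u)=\tfrac12\Phi\Big(\tfrac{(\hat\mu(u)-\mu_1(u))^\top\hat\theta(u)}{\sqrt{\hat\theta(u)^\top\Sigma(u)\hat\theta(u)}}\Big)+\tfrac12\bar\Phi\Big(\tfrac{(\hat\mu(u)-\mu_2(u))^\top\hat\theta(u)}{\sqrt{\hat\theta(u)^\top\Sigma(u)\hat\theta(u)}}\Big).$$ $a\lesssim b$ means $a\le Cb$ for a constant $C$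 not depending on $n$ or $u$. *)

theory Defs
  imports "HOL-Probability.Probability"
begin

definition Phi :: "real \<Rightarrow> real" where
  "Phi x = cdf (density lborel std_normal_density) x"

definition Phibar :: "real \<Rightarrow> real" where
  "Phibar x = 1 - Phi x"

definition pos_def :: "real^'p^'p \<Rightarrow> bool" where
  "pos_def A \<longleftrightarrow> transpose A = A \<and> (\<forall>x. x \<noteq> 0 \<longrightarrow> x \<bullet> (A *v x) > 0)"

definition delta :: "(real \<Rightarrow> real^'p) \<Rightarrow> (real \<Rightarrow> real^'p) \<Rightarrow> real \<Rightarrow> real^'p" where
  "delta mu1 mu2 u = mu1 u - mu2 u"

definition mid :: "(real \<Rightarrow> real^'p) \<Rightarrow> (real \<Rightarrow> real^'p) \<Rightarrow> real \<Rightarrow> real^'p" where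
  "mid mu1 mu2 u = (1/2) *\<^sub>R (mu1 u + mu2 u)"

definition beta_star :: "(real \<Rightarrow> real^'p^'p) \<Rightarrow> (real \<Rightarrow> real^'p) \<Rightarrow> (real \<Rightarrow> real^'p) \<Rightarrow> real \<Rightarrow> real^'p" where
  "beta_star Sig mu1 mu2 u = matrix_inv (Sig u) *v delta mu1 mu2 u"

definition Delta :: "(real \<Rightarrow> real^'p^'p) \<Rightarrow> (real \<Rightarrow> real^'p) \<Rightarrow> (real \<Rightarrow> real^'p) \<Rightarrow> real \<Rightarrow> real" where
  "Delta Sig mu1 mu2 u = sqrt (delta mu1 mu2 u \<bullet> (matrix_inv (Sig u) *v delta mu1 mu2 u))"

(* Conditional least-squares loss E[(Z - theta^T (X - mu(U)))^2 | U = u] in the model: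
   Z = 1(Y=1) - 1/2, P(Y=1)=P(Y=0)=1/2, X - mu(u) | Y=1,U=u ~ N(delta/2, Sig),
   X - mu(u) | Y=0,U=u ~ N(-delta/2, Sig).  Computing the moments:
   E[Z^2] = 1/4, E[Z theta^T W] = theta^T delta / 4,
   E[(theta^T W)^2] = theta^T Sig theta + (theta^T delta)^2 / 4. *)
definition ls_loss :: "(real \<Rightarrow> real^'p^'p) \<Rightarrow> (real \<Rightarrow> real^'p) \<Rightarrow> (real \<Rightarrow> real^'p) \<Rightarrow> real \<Rightarrow> real^'p \<Rightarrow> real" where
  "ls_loss Sig mu1 mu2 u \<theta> =
     1/4 - (\<theta> \<bullet> delta mu1 mu2 u) / 2 + \<theta> \<bullet> (Sig u *v \<theta>) + (\<theta> \<bullet> delta mu1 mu2 u)^2 / 4"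

definition theta_star :: "(real \<Rightarrow> real^'p^'p) \<Rightarrow> (real \<Rightarrow> real^'p) \<Rightarrow> (real \<Rightarrow> real^'p) \<Rightarrow> real \<Rightarrow> real^'p" where
  "theta_star Sig mu1 mu2 u =
     (THE \<theta>. \<forall>\<theta>'. ls_loss Sig mu1 mu2 u \<theta> \<le> ls_loss Sig mu1 mu2 u \<theta>')"

definition oracle_risk :: "(real \<Rightarrow> real^'p^'p) \<Rightarrow> (real \<Rightarrow> real^'p) \<Rightarrow> (real \<Rightarrow> real^'p) \<Rightarrow> real \<Rightarrow> real" where
  "oracle_risk Sig mu1 mu2 u = Phi (- Delta Sig mu1 mu2 u / 2)"

(* conditional misclassification risk R_n(u) of the rule 1{(x - muhat)^T thetahat >= 0} *)
definition plugin_risk :: "(real \<Rightarrow> real^'p^'p) \<Rightarrow> (real \<Rightarrow> real^'p) \<Rightarrow> (real \<Rightarrow> real^'p) \<Rightarrow>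
     real^'p \<Rightarrow> real^'p \<Rightarrow> real \<Rightarrow> real" where
  "plugin_risk Sig mu1 mu2 muhat thetahat u =
     (let s = sqrt (thetahat \<bullet> (Sig u *v thetahat)) in
      1/2 * Phi (((muhat - mu1 u) \<bullet> thetahat) / s) + 1/2 * Phibar (((muhat - mu2 u) \<bullet> thetahat) / s))"

end

theory Submission
  imports Defs
begin

lemma Phi_diff:
  fixes a x :: real assumes "a \<le> x"
  shows "Phi x - Phi a = integral {a..x} std_normal_density"
proof -
  define M where "M = density lborel std_normal_density"
  interpret P: prob_space M unfolding M_def by (rule prob_space_normal_density) simp
  have sM: "sets M = sets borel" unfolding M_def by simp
  have un: "{..x} = {..a} \<union> {a<..x}" using assms by auto
  have "measure M {..x} = measure M {..a} + measure M {a<..x}"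
    unfolding un by (rule P.finite_measure_Union) (auto simp: sM)
  moreover have "measure M {a<..x} = integral {a<..x} std_normal_density"
  proof -
    have "measure M {a<..x} = integral\<^sup>L M (indicator {a<..x})"
      by (simp add: sM)
    also have "\<dots> = integral\<^sup>L lborel (\<lambda>t. std_normal_density t *\<^sub>R indicator {a<..x} t)"
      unfolding M_def by (rule integral_density) auto
    also have "\<dots> = (LINT t:{a<..x}|lborel. std_normal_density t)"
      by (simp add: set_lebesgue_integral_def mult.commute)
    also have "\<dots> = integral {a<..x} std_normal_density"
    proof (rule set_borel_integral_eq_integral)
      show "set_integrable lborel {a<..x} std_normal_density"
        unfolding set_integrable_def
        by (rule integrable_mult_indicator) auto
    qed
    finally show ?thesis .
  qed
  moreover have "integral {a<..x} std_normal_density = integral {a..x} std_normal_density"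
    by (rule integral_spike_set) (auto intro: negligible_subset[of "{a}"])
  ultimately show ?thesis unfolding Phi_def cdf_def M_def by simp
qed

abbreviation phi :: "real \<Rightarrow> real" where "phi \<equiv> std_normal_density"

lemma phi_cont: "continuous_on A phi"
  unfolding std_normal_density_def by (intro continuous_intros) auto

lemma Phi_deriv: "(Phi has_real_derivative phi x) (at x)"
proof -
  define a where "a = x - 1"
  define b where "b = x + 1"
  have "((\<lambda>y. integral {a..y} phi) has_real_derivative phi x) (at x within {a..b})"
    using integral_has_real_derivative[OF phi_cont, of x a b] by (simp add: a_def b_def)
  moreover have "x \<in> interior {a..b}" by (simp add: a_def b_def)
  ultimately have d: "((\<lambda>y. integral {a..y} phi) has_real_derivative phi x) (at x)"
    by (metis at_within_interior)
  have "((\<lambda>y. Phi a + integral {a..y} phi) has_real_derivative phi x) (at x)"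
    using DERIV_add[OF DERIV_const d] by simp
  then show ?thesis
  proof (rule has_field_derivative_transform_within_open[where S="{a<..}"])
    show "open {a<..}" by simp
    show "x \<in> {a<..}" by (simp add: a_def)
    fix y assume "y \<in> {a<..}"
    then show "Phi a + integral {a..y} phi = Phi y" using Phi_diff[of a y] by simp
  qed
qed

lemma phi_deriv: "(phi has_real_derivative (- x * phi x)) (at x)"
proof -
  have "((\<lambda>x. (1 / sqrt (2 * pi)) * exp (- x\<^sup>2 / 2)) has_real_derivative
      (1 / sqrt (2 * pi)) * (exp (- x\<^sup>2 / 2) * (- (2 * x) / 2))) (at x)"
  proof -
    have "((\<lambda>x. - x\<^sup>2 / 2) has_real_derivative (- (real 2 * x ^ (2 - Suc 0))) / 2) (at x)"
      by (intro DERIV_cdivide DERIV_minus DERIV_pow)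
    then have "((\<lambda>x. - x\<^sup>2 / 2) has_real_derivative (- (2 * x) / 2)) (at x)" by simp
    then show ?thesis by (intro DERIV_cmult DERIV_chain2[OF DERIV_exp])
  qed
  moreover have "(1 / sqrt (2 * pi)) * (exp (- x\<^sup>2 / 2) * (- (2 * x) / 2)) = - x * phi x"
    by (simp add: std_normal_density_def)
  ultimately have d: "((\<lambda>x. (1 / sqrt (2 * pi)) * exp (- x\<^sup>2 / 2)) has_real_derivative - x * phi x) (at x)"
    by simp
  have e: "phi = (\<lambda>x. (1 / sqrt (2 * pi)) * exp (- x\<^sup>2 / 2))"
    by (rule ext) (simp add: std_normal_density_def)
  show ?thesis by (subst (1) e) (rule d)
qed

lemma phi_even: "phi (- x) = phi x"
  by (simp add: std_normal_density_def)

lemma phi_nonneg: "0 \<le> phi x" by simp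

lemma phi_le_exp: "phi x \<le> exp (- (x\<^sup>2) / 2)"
proof -
  have "1 \<le> 2 * pi" using pi_gt3 by simp
  then have s1: "1 \<le> sqrt (2 * pi)" using real_sqrt_le_mono[of 1 "2*pi"] by simp
  have "phi x = exp (- (x\<^sup>2) / 2) / sqrt (2 * pi)" by (simp add: std_normal_density_def)
  also have "\<dots> \<le> exp (- (x\<^sup>2) / 2) / 1"
    by (rule divide_left_mono) (use s1 in auto)
  finally show ?thesis by simp
qed

lemma phi_le1: "phi x \<le> 1"
proof -
  have "exp (- (x\<^sup>2) / 2) \<le> 1" by simp
  then show ?thesis using phi_le_exp[of x] by linarith
qed

lemma phi_mono: assumes "0 \<le> y" "y \<le> x" shows "phi x \<le> phi y"
proof -
  have "y\<^sup>2 \<le> x\<^sup>2" using assms by (simp add: power_mono)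
  then have "exp (- (x\<^sup>2 / 2)) \<le> exp (- (y\<^sup>2 / 2))" by simp
  then have "exp (- (x\<^sup>2 / 2)) / sqrt (2 * pi) \<le> exp (- (y\<^sup>2 / 2)) / sqrt (2 * pi)"
    by (rule divide_right_mono) simp
  then show ?thesis unfolding std_normal_density_def by simp
qed

lemma phi_abs_mono: assumes "0 \<le> y" "y \<le> \<bar>x\<bar>" shows "phi x \<le> phi y"
  using phi_mono[OF assms] phi_even[of x] by (cases "x \<ge> 0") auto

lemma deriv_bound:
  fixes f f' :: "real \<Rightarrow> real"
  assumes "\<And>z. min a b \<le> z \<Longrightarrow> z \<le> max a b \<Longrightarrow> (f has_real_derivative f' z) (at z) \<and> \<bar>f' z\<bar> \<le> B"
  shows "\<bar>f b - f a\<bar> \<le> B * \<bar>b - a\<bar>"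
proof (cases a b rule: linorder_cases)
  case less
  then obtain z where z: "a < z" "z < b" "f b - f a = (b - a) * f' z"
    using MVT2[of a b f f'] assms by (force simp: min_def max_def)
  then have "\<bar>f' z\<bar> \<le> B" using assms[of z] less by (auto simp: min_def max_def)
  then show ?thesis using z less by (simp add: abs_mult mult.commute mult_left_mono)
next
  case equal then show ?thesis by simp
next
  case greater
  then obtain z where z: "b < z" "z < a" "f a - f b = (a - b) * f' z"
    using MVT2[of b a f f'] assms by (force simp: min_def max_def)
  then have "\<bar>f' z\<bar> \<le> B" using assms[of z] greater by (auto simp: min_def max_def)
  then show ?thesis using z greater by (simp add: abs_mult mult.commute mult_left_mono abs_minus_commute)
qed

lemma Phi_sym: "Phi (- x) = 1 - Phi x"
proof -
  define f where "f y = Phi y + Phi (- y)" for y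
  have "\<forall>y. DERIV f y :> 0"
  proof
    fix y
    have "DERIV f y :> phi y + phi (- y) * (- 1)"
      unfolding f_def
      by (intro DERIV_add Phi_deriv DERIV_chain2[OF Phi_deriv] DERIV_minus DERIV_ident)
    then show "DERIV f y :> 0" by (simp add: phi_even)
  qed
  then have c: "\<And>y. f y = f x" by (metis DERIV_isconst_all)
  define M where "M = density lborel phi"
  interpret P: prob_space M unfolding M_def by (rule prob_space_normal_density) simp
  have sM: "sets M = sets borel" unfolding M_def by simp
  interpret F: finite_borel_measure M by unfold_locales (simp add: sM)
  have t1: "(Phi \<longlongrightarrow> 1) at_top"
    unfolding Phi_def M_def[symmetric]
    using F.cdf_lim_at_top P.prob_space by simp
  have t0: "(Phi \<longlongrightarrow> 0) at_bot"
    unfolding Phi_def M_def[symmetric] by (rule F.cdf_lim_at_bot)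
  have "((\<lambda>y. Phi (- y)) \<longlongrightarrow> 0) at_top"
    using filterlim_compose[OF t0 filterlim_uminus_at_bot_at_top] by simp
  then have "(f \<longlongrightarrow> 1 + 0) at_top" unfolding f_def by (intro tendsto_add t1)
  moreover have "(f \<longlongrightarrow> f x) at_top"
  proof -
    have "f = (\<lambda>_. f x)" using c by blast
    then show ?thesis by (metis tendsto_const)
  qed
  ultimately have "f x = 1 + 0" using tendsto_unique[OF trivial_limit_at_top_linorder] by metis
  then show ?thesis unfolding f_def by simp
qed

lemma Phi_lip:
  assumes "\<And>z. min a b \<le> z \<Longrightarrow> z \<le> max a b \<Longrightarrow> phi z \<le> B"
  shows "\<bar>Phi b - Phi a\<bar> \<le> B * \<bar>b - a\<bar>"
  by (rule deriv_bound[where f'=phi]) (use assms Phi_deriv in auto)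

lemma phi_diff_bound:
  assumes "d > 0" "\<bar>tau\<bar> \<le> d/2"
  shows "\<bar>phi (d + tau) - phi (d - tau)\<bar> \<le> 3 * d * phi (d/2) * \<bar>tau\<bar>"
proof -
  have "\<bar>phi (d + tau) - phi (d - tau)\<bar> \<le> (3/2 * d * phi (d/2)) * \<bar>(d + tau) - (d - tau)\<bar>"
  proof (rule deriv_bound[where f'="\<lambda>z. - z * phi z"])
    fix z assume z: "min (d - tau) (d + tau) \<le> z" "z \<le> max (d - tau) (d + tau)"
    then have z1: "d/2 \<le> z" "z \<le> 3/2*d" using assms by (auto simp: min_def max_def split: if_splits)
    have "\<bar>- z * phi z\<bar> = z * phi z" using z1 assms by simp
    also have "\<dots> \<le> (3/2*d) * phi (d/2)"
      by (rule mult_mono) (use z1 assms phi_mono[of "d/2" z] in auto)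
    finally show "(phi has_real_derivative - z * phi z) (at z) \<and> \<bar>- z * phi z\<bar> \<le> 3/2 * d * phi (d/2)"
      using phi_deriv by simp
  qed
  also have "\<dots> = 3 * d * phi (d/2) * \<bar>tau\<bar>" by (simp add: abs_mult)
  finally show ?thesis .
qed

lemma G_bound:
  assumes "d > 0" "\<bar>t\<bar> \<le> d/2"
  shows "\<bar>Phi (t - d) + Phi (- t - d) - 2 * Phi (- d)\<bar> \<le> 3 * d * phi (d/2) * t\<^sup>2"
proof -
  define G where "G \<tau> = Phi (\<tau> - d) + Phi (- \<tau> - d)" for \<tau>
  have "\<bar>G t - G 0\<bar> \<le> (3 * d * phi (d/2) * \<bar>t\<bar>) * \<bar>t - 0\<bar>"
  proof (rule deriv_bound[where f'="\<lambda>\<tau>. phi (\<tau> - d) - phi (- \<tau> - d)"])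
    fix \<tau> assume "min 0 t \<le> \<tau>" "\<tau> \<le> max 0 t"
    then have tau: "\<bar>\<tau>\<bar> \<le> \<bar>t\<bar>" by (auto simp: min_def max_def split: if_splits)
    have "(G has_real_derivative phi (\<tau> - d) * 1 + phi (- \<tau> - d) * (- 1)) (at \<tau>)"
    proof -
      have d1: "((\<lambda>x. x - d) has_real_derivative 1) (at \<tau>)" by (auto intro!: derivative_eq_intros)
      have d2: "((\<lambda>x. - x - d) has_real_derivative -1) (at \<tau>)" by (auto intro!: derivative_eq_intros)
      show ?thesis unfolding G_def by (intro DERIV_add DERIV_chain2[OF Phi_deriv] d1 d2)
    qed
    moreover have "\<bar>phi (\<tau> - d) - phi (- \<tau> - d)\<bar> \<le> 3 * d * phi (d/2) * \<bar>t\<bar>"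
    proof -
      have "phi (\<tau> - d) = phi (d - \<tau>)" using phi_even[of "d - \<tau>"] by simp
      moreover have "phi (- \<tau> - d) = phi (d + \<tau>)" using phi_even[of "d + \<tau>"] by (simp add: algebra_simps)
      ultimately have "\<bar>phi (\<tau> - d) - phi (- \<tau> - d)\<bar> = \<bar>phi (d + \<tau>) - phi (d - \<tau>)\<bar>" by simp
      also have "\<dots> \<le> 3 * d * phi (d/2) * \<bar>\<tau>\<bar>"
        by (rule phi_diff_bound) (use assms tau in auto)
      also have "\<dots> \<le> 3 * d * phi (d/2) * \<bar>t\<bar>"
        by (rule mult_left_mono) (use assms tau in auto)
      finally show ?thesis .
    qed
    ultimately show "(G has_real_derivative phi (\<tau> - d) - phi (- \<tau> - d)) (at \<tau>) \<and>
        \<bar>phi (\<tau> - d) - phi (- \<tau> - d)\<bar> \<le> 3 * d * phi (d/2) * \<bar>t\<bar>" by simp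
  qed
  moreover have "G 0 = 2 * Phi (- d)" by (simp add: G_def)
  ultimately show ?thesis by (simp add: G_def power2_eq_square mult.assoc abs_mult)
qed

lemma decay: "(4 + D\<^sup>2)\<^sup>2 * phi (D/8) \<le> 65536"
proof -
  define y where "y = D\<^sup>2 / 128"
  have y0: "0 \<le> y" by (simp add: y_def)
  have "phi (D/8) \<le> exp (- ((D/8)\<^sup>2) / 2)" by (rule phi_le_exp)
  also have "- ((D/8)\<^sup>2) / 2 = - y" by (simp add: y_def power_divide)
  finally have p: "phi (D/8) \<le> exp (- y)" .
  have e1: "(1 + y/2)\<^sup>2 \<le> exp y"
  proof -
    have "1 + y/2 \<le> exp (y/2)" by (rule exp_ge_add_one_self)
    then have "(1 + y/2)\<^sup>2 \<le> (exp (y/2))\<^sup>2" by (rule power_mono) (use y0 in simp)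
    also have "(exp (y/2))\<^sup>2 = exp y" by (simp add: power2_eq_square exp_add[symmetric])
    finally show ?thesis .
  qed
  have "4 + D\<^sup>2 \<le> 256 * (1 + y/2)" by (simp add: y_def)
  then have "(4 + D\<^sup>2)\<^sup>2 \<le> (256 * (1 + y/2))\<^sup>2" by (rule power_mono) simp
  also have "\<dots> = 65536 * (1 + y/2)\<^sup>2" by (simp add: power2_eq_square algebra_simps)
  also have "\<dots> \<le> 65536 * exp y" using e1 by simp
  finally have q: "(4 + D\<^sup>2)\<^sup>2 \<le> 65536 * exp y" .
  have "(4 + D\<^sup>2)\<^sup>2 * phi (D/8) \<le> (65536 * exp y) * exp (- y)"
    by (rule mult_mono[OF q p]) auto
  also have "\<dots> = 65536" by (simp add: exp_minus)
  finally show ?thesis .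
qed

lemma core:
  fixes D D0 M k s d t H HS e :: real
  assumes D0: "0 < D0" "D0 \<le> D" and M1: "1 \<le> M" and k: "k = 1 / (4 + D\<^sup>2)" and s0: "0 < s"
    and ss: "k\<^sup>2 * D\<^sup>2 / 2 \<le> s\<^sup>2" and dl: "0 \<le> D/2 - d" and du: "D/2 - d \<le> D * HS / (2 * s\<^sup>2)"
    and hs1: "HS \<le> M * H" and hs2: "HS \<le> s\<^sup>2 / 8" and tt: "t\<^sup>2 \<le> 2 * (k\<^sup>2 * e\<^sup>2 + H) / s\<^sup>2"
    and ta: "\<bar>t\<bar> \<le> D/8" and H0: "0 \<le> H"
  shows "\<bar>1/2 * Phi (t - d) + 1/2 * Phi (- t - d) - Phi (- D/2)\<bar> \<le> 300000 * M / D0 * (H + e\<^sup>2)"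
proof -
  define Q where "Q = (4 + D\<^sup>2)\<^sup>2"
  define P where "P = phi (D/8)"
  have Dpos: "0 < D" using D0 by simp
  have q4: "0 < 4 + D\<^sup>2" by (simp add: add_pos_nonneg)
  have Q0: "0 < Q" unfolding Q_def using q4 by simp
  have QP: "Q * P \<le> 65536" unfolding Q_def P_def by (rule decay)
  have P0: "0 \<le> P" "P \<le> 1" unfolding P_def using phi_le1 by auto
  have kq: "k\<^sup>2 * Q = 1" unfolding k Q_def using q4 by (simp add: power_one_over)
  have s2: "0 < s\<^sup>2" using s0 by simp
  have ss': "D\<^sup>2 / (2 * Q) \<le> s\<^sup>2"
  proof -
    have "k\<^sup>2 = 1 / Q" using kq Q0 by (simp add: field_simps)
    then show ?thesis using ss by simp
  qed
  have inv: "1 / s\<^sup>2 \<le> 2 * Q / D\<^sup>2"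
  proof -
    have "0 < D\<^sup>2 / (2 * Q)" using Dpos Q0 by simp
    then have "inverse (s\<^sup>2) \<le> inverse (D\<^sup>2 / (2 * Q))" by (rule le_imp_inverse_le[OF ss'])
    then show ?thesis by (simp add: inverse_eq_divide)
  qed
  have hsd: "D * HS / (2 * s\<^sup>2) \<le> D / 16"
  proof -
    have "D * HS \<le> D * (s\<^sup>2 / 8)" using hs2 Dpos by (simp add: mult_left_mono)
    then have "D * HS / (2 * s\<^sup>2) \<le> D * (s\<^sup>2 / 8) / (2 * s\<^sup>2)" by (rule divide_right_mono) (use s2 in simp)
    also have "\<dots> = D / 16" using s0 by (simp add: power2_eq_square)
    finally show ?thesis .
  qed
  have dge: "7 * D / 16 \<le> d" "d \<le> D/2" using du hsd dl by linarith+
  have dpos: "0 < d" using dge Dpos by linarith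
  have T2a: "\<bar>Phi (- d) - Phi (- D/2)\<bar> \<le> P * \<bar>- d - (- D/2)\<bar>"
    unfolding P_def
  proof (rule Phi_lip)
    fix z assume "min (- D/2) (- d) \<le> z" "z \<le> max (- D/2) (- d)"
    then have "D/8 \<le> \<bar>z\<bar>" using dge Dpos by (auto simp: min_def max_def split: if_splits)
    then show "phi z \<le> phi (D/8)" by (intro phi_abs_mono) (use Dpos in auto)
  qed
  have HSH: "D * HS / (2 * s\<^sup>2) \<le> D * (M * H) * (1 / s\<^sup>2) / 2"
  proof -
    have "D * HS \<le> D * (M * H)" using hs1 Dpos by (simp add: mult_left_mono)
    then have "D * HS / (2 * s\<^sup>2) \<le> D * (M * H) / (2 * s\<^sup>2)" by (rule divide_right_mono) (use s2 in simp)
    then show ?thesis by simp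
  qed
  have "D * (M * H) * (1 / s\<^sup>2) / 2 \<le> D * (M * H) * (2 * Q / D\<^sup>2) / 2"
    using inv Dpos M1 H0 by (intro divide_right_mono mult_left_mono) auto
  also have "\<dots> = M * H * Q / D" using Dpos by (simp add: power2_eq_square field_simps)
  finally have "D/2 - d \<le> M * H * Q / D" using du HSH by linarith
  then have "P * (D/2 - d) \<le> P * (M * H * Q / D)" by (rule mult_left_mono) (use P0 in simp)
  also have "\<dots> = M * H * (Q * P) / D" by simp
  also have "\<dots> \<le> M * H * 65536 / D"
    using QP M1 H0 Dpos by (intro divide_right_mono mult_left_mono) auto
  also have "\<dots> \<le> M * H * 65536 / D0"
    using M1 H0 D0 by (intro divide_left_mono) auto
  finally have T2b: "P * (D/2 - d) \<le> M * H * 65536 / D0" .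
  have "\<bar>- d - (- D/2)\<bar> = D/2 - d" using dl by simp
  then have T2: "\<bar>Phi (- d) - Phi (- D/2)\<bar> \<le> 65536 * M * H / D0"
    using T2a T2b by (simp add: mult.commute mult.left_commute)
  have G: "\<bar>Phi (t - d) + Phi (- t - d) - 2 * Phi (- d)\<bar> \<le> 3 * d * phi (d/2) * t\<^sup>2"
    by (rule G_bound) (use dpos dge ta Dpos in auto)
  have dphi: "d * phi (d/2) \<le> (D/2) * P"
    unfolding P_def
    by (rule mult_mono) (use dge Dpos phi_mono[of "D/8" "d/2"] in auto)
  have "t\<^sup>2 \<le> 2 * (k\<^sup>2 * e\<^sup>2 + H) * (1 / s\<^sup>2)" using tt by simp
  also have "\<dots> \<le> 2 * (k\<^sup>2 * e\<^sup>2 + H) * (2 * Q / D\<^sup>2)"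
    using inv H0 by (intro mult_left_mono) auto
  also have "\<dots> = 4 * (e\<^sup>2 + Q * H) / D\<^sup>2"
    using kq Dpos by (simp add: field_simps)
  finally have t2: "t\<^sup>2 \<le> 4 * (e\<^sup>2 + Q * H) / D\<^sup>2" .
  have "3 * d * phi (d/2) * t\<^sup>2 \<le> 3 * ((D/2) * P) * (4 * (e\<^sup>2 + Q * H) / D\<^sup>2)"
  proof -
    have "(d * phi (d/2)) * t\<^sup>2 \<le> ((D/2) * P) * (4 * (e\<^sup>2 + Q * H) / D\<^sup>2)"
      by (rule mult_mono[OF dphi t2]) (use Dpos P0 in auto)
    then show ?thesis by (simp add: mult.assoc)
  qed
  also have "\<dots> = 6 * (P * e\<^sup>2 + (Q * P) * H) / D" using Dpos by (simp add: power2_eq_square field_simps)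
  also have "\<dots> \<le> 6 * (e\<^sup>2 + 65536 * H) / D"
  proof -
    have "P * e\<^sup>2 \<le> e\<^sup>2" using P0 by (simp add: mult_left_le_one_le)
    moreover have "(Q * P) * H \<le> 65536 * H" using QP H0 by (simp add: mult_right_mono)
    ultimately show ?thesis using Dpos by (intro divide_right_mono) auto
  qed
  also have "\<dots> \<le> 6 * (e\<^sup>2 + 65536 * H) / D0"
    using D0 H0 by (intro divide_left_mono) auto
  finally have T1: "\<bar>Phi (t - d) + Phi (- t - d) - 2 * Phi (- d)\<bar> \<le> 6 * (e\<^sup>2 + 65536 * H) / D0"
    using G by linarith
  have "\<bar>1/2 * Phi (t - d) + 1/2 * Phi (- t - d) - Phi (- D/2)\<bar>
      \<le> 1/2 * \<bar>Phi (t - d) + Phi (- t - d) - 2 * Phi (- d)\<bar> + \<bar>Phi (- d) - Phi (- D/2)\<bar>"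
  proof -
    have "\<And>a b c e :: real. \<bar>1/2 * a + 1/2 * b - c\<bar> \<le> 1/2 * \<bar>a + b - 2 * e\<bar> + \<bar>e - c\<bar>"
    proof -
      fix a b c e :: real
      have "1/2 * a + 1/2 * b - c = 1/2 * (a + b - 2 * e) + (e - c)" by (simp add: algebra_simps)
      then have "\<bar>1/2 * a + 1/2 * b - c\<bar> \<le> \<bar>1/2 * (a + b - 2 * e)\<bar> + \<bar>e - c\<bar>"
        by (metis abs_triangle_ineq)
      then show "\<bar>1/2 * a + 1/2 * b - c\<bar> \<le> 1/2 * \<bar>a + b - 2 * e\<bar> + \<bar>e - c\<bar>" by (simp add: abs_mult)
    qed
    then show ?thesis .
  qed
  also have "\<dots> \<le> 3 * (e\<^sup>2 + 65536 * H) / D0 + 65536 * M * H / D0"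
  proof -
    have "1/2 * (6 * (e\<^sup>2 + 65536 * H) / D0) = 3 * (e\<^sup>2 + 65536 * H) / D0"
      using D0 by (simp add: field_simps)
    moreover have "1/2 * \<bar>Phi (t - d) + Phi (- t - d) - 2 * Phi (- d)\<bar> \<le> 1/2 * (6 * (e\<^sup>2 + 65536 * H) / D0)"
      using T1 by (rule mult_left_mono) simp
    ultimately have "1/2 * \<bar>Phi (t - d) + Phi (- t - d) - 2 * Phi (- d)\<bar> \<le> 3 * (e\<^sup>2 + 65536 * H) / D0"
      by metis
    then show ?thesis using T2 by (rule add_mono)
  qed
  also have "\<dots> = (3 * e\<^sup>2 + 196608 * H + 65536 * M * H) / D0" by (simp add: add_divide_distrib)
  also have "\<dots> \<le> (300000 * M * (H + e\<^sup>2)) / D0"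
  proof (rule divide_right_mono)
    have "1 * e\<^sup>2 \<le> M * e\<^sup>2" using M1 by (intro mult_right_mono) auto
    moreover have "0 \<le> M * e\<^sup>2" using M1 by simp
    ultimately have "3 * e\<^sup>2 \<le> 300000 * M * e\<^sup>2" by linarith
    moreover have "196608 * H + 65536 * M * H \<le> 300000 * M * H"
    proof -
      have "1 * H \<le> M * H" using M1 H0 by (intro mult_right_mono) auto
      then show ?thesis using H0 by linarith
    qed
    ultimately show "3 * e\<^sup>2 + 196608 * H + 65536 * M * H \<le> 300000 * M * (H + e\<^sup>2)"
      by (simp add: algebra_simps)
  qed (use D0 in simp)
  also have "\<dots> = 300000 * M / D0 * (H + e\<^sup>2)" by simp
  finally show ?thesis .
qed

lemma pd_sym:
  fixes S :: "real^'p^'p"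
  assumes "pos_def S" shows "x \<bullet> (S *v y) = y \<bullet> (S *v x)"
proof -
  have "x \<bullet> (S *v y) = (x v* S) \<bullet> y" by (simp add: dot_lmul_matrix)
  also have "x v* S = transpose S *v x" by simp
  also have "transpose S = S" using assms by (simp add: pos_def_def)
  finally show ?thesis by (simp add: inner_commute)
qed

lemma pd_pos2:
  fixes S :: "real^'p^'p"
  assumes "pos_def S" "x \<noteq> 0" shows "0 < x \<bullet> (S *v x)"
  using assms unfolding pos_def_def by blast

lemma pd_pos1:
  fixes S :: "real^'p^'p"
  assumes "pos_def S" shows "0 \<le> x \<bullet> (S *v x)"
  using pd_pos2[OF assms, of x] by (cases "x = 0") auto

lemmas pd_pos = pd_pos1 pd_pos2

lemma pd_inv:
  fixes S :: "real^'p^'p"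
  assumes "pos_def S" shows "S *v (matrix_inv S *v v) = v"
proof -
  have "inj ((*v) S)"
  proof (rule injI)
    fix x y assume "S *v x = S *v y"
    then have "S *v (x - y) = 0" by (simp add: matrix_vector_mult_diff_distrib)
    then have "(x - y) \<bullet> (S *v (x - y)) = 0" by simp
    then show "x = y" using pd_pos(2)[OF assms, of "x - y"] by auto
  qed
  then obtain B where "B ** S = mat 1" using matrix_left_invertible_injective by blast
  then have "invertible S" using invertible_left_inverse by blast
  then have "\<exists>A'. S ** A' = mat 1 \<and> A' ** S = mat 1" by (simp add: invertible_def)
  then have "S ** matrix_inv S = mat 1 \<and> matrix_inv S ** S = mat 1"
    unfolding matrix_inv_def by (rule someI_ex)
  then show ?thesis by (simp add: matrix_vector_mul_assoc)
qed

lemma pd_CS: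
  fixes S :: "real^'p^'p"
  assumes "pos_def S" shows "(x \<bullet> (S *v y))\<^sup>2 \<le> (x \<bullet> (S *v x)) * (y \<bullet> (S *v y))"
proof (cases "y = 0")
  case True then show ?thesis by simp
next
  case False
  define c where "c = y \<bullet> (S *v y)"
  define a where "a = x \<bullet> (S *v y)"
  define l where "l = a / c"
  have c0: "0 < c" unfolding c_def using pd_pos(2)[OF assms False] .
  have "0 \<le> (x - l *\<^sub>R y) \<bullet> (S *v (x - l *\<^sub>R y))" by (rule pd_pos(1)[OF assms])
  also have "\<dots> = x \<bullet> (S *v x) - l * a - l * (y \<bullet> (S *v x)) + l * l * c"
    by (simp add: matrix_vector_mult_diff_distrib matrix_vector_mult_scaleR inner_diff_left inner_diff_right
        a_def c_def algebra_simps)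
  also have "y \<bullet> (S *v x) = a" unfolding a_def by (rule pd_sym[OF assms, symmetric])
  also have "x \<bullet> (S *v x) - l * a - l * a + l * l * c = x \<bullet> (S *v x) - a\<^sup>2 / c"
    using c0 by (simp add: l_def power2_eq_square field_simps)
  finally have "a\<^sup>2 / c \<le> x \<bullet> (S *v x)" by simp
  then have "a\<^sup>2 \<le> x \<bullet> (S *v x) * c" using c0 by (simp add: divide_le_eq)
  then show ?thesis unfolding a_def c_def .
qed

lemma pd_bound:
  fixes S :: "real^'p^'p"
  shows "x \<bullet> (S *v x) \<le> onorm (\<lambda>x. S *v x) * (norm x)\<^sup>2"
proof -
  have "x \<bullet> (S *v x) \<le> norm x * norm (S *v x)" by (rule norm_cauchy_schwarz)
  also have "\<dots> \<le> norm x * (onorm (\<lambda>x. S *v x) * norm x)"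
    by (rule mult_left_mono) (auto intro: onorm)
  finally show ?thesis by (simp add: power2_eq_square algebra_simps)
qed

lemma ls_loss_expand:
  fixes Sig :: "real \<Rightarrow> real^'p^'p"
  assumes pd: "pos_def (Sig u)" and Sb: "Sig u *v b = delta mu1 mu2 u"
    and k: "k * (4 + delta mu1 mu2 u \<bullet> b) = 1"
  shows "ls_loss Sig mu1 mu2 u (k *\<^sub>R b + h) = ls_loss Sig mu1 mu2 u (k *\<^sub>R b)
      + h \<bullet> (Sig u *v h) + (h \<bullet> delta mu1 mu2 u)\<^sup>2 / 4"
proof -
  define S where "S = Sig u"
  define dl where "dl = delta mu1 mu2 u"
  define q0 where "q0 = dl \<bullet> b"
  define p where "p = h \<bullet> dl"
  have bh: "b \<bullet> (S *v h) = p" unfolding p_def dl_def S_def using pd_sym[OF pd, of b h] Sb by simp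
  have hb: "h \<bullet> (S *v b) = p" unfolding p_def dl_def S_def using Sb by simp
  have bb: "b \<bullet> (S *v b) = q0" unfolding q0_def dl_def S_def using Sb by (simp add: inner_commute)
  have L1: "ls_loss Sig mu1 mu2 u (k *\<^sub>R b + h) = 1/4 - (k * q0 + p)/2 + (k*k*q0 + 2*k*p + h \<bullet> (S *v h)) + (k * q0 + p)\<^sup>2/4"
    unfolding ls_loss_def S_def[symmetric] dl_def[symmetric]
    using bh hb bb
    by (simp add: matrix_vector_right_distrib matrix_vector_mult_scaleR inner_add_left inner_add_right
        q0_def p_def inner_commute algebra_simps)
  moreover have L2: "ls_loss Sig mu1 mu2 u (k *\<^sub>R b) = 1/4 - (k * q0)/2 + k*k*q0 + (k * q0)\<^sup>2/4"
    unfolding ls_loss_def S_def[symmetric] dl_def[symmetric]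
    using bb by (simp add: matrix_vector_mult_scaleR q0_def inner_commute algebra_simps)
  moreover have "k * (4 + q0) = 1" using k unfolding q0_def dl_def .
  moreover have id: "\<And>H. (1/4 - (k * q0 + p)/2 + (k*k*q0 + 2*k*p + H) + (k * q0 + p)\<^sup>2/4)
     - (1/4 - (k * q0)/2 + k*k*q0 + (k * q0)\<^sup>2/4 + H + p\<^sup>2/4) = p/2 * (k * (4 + q0) - 1)"
    by (simp add: power2_eq_square field_simps)
  note id1 = id[of "h \<bullet> (S *v h)"]
  ultimately have z: "p/2 * (k * (4 + q0) - 1) = 0" by simp
  show ?thesis
    unfolding S_def[symmetric] dl_def[symmetric] p_def[symmetric]
    using id1 z L1 L2 by linarith
qed

lemma theta_star_eq:
  fixes Sig :: "real \<Rightarrow> real^'p^'p"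
  assumes pd: "pos_def (Sig u)" and Sb: "Sig u *v b = delta mu1 mu2 u"
    and k: "k * (4 + delta mu1 mu2 u \<bullet> b) = 1"
  shows "theta_star Sig mu1 mu2 u = k *\<^sub>R b"
  unfolding theta_star_def
proof (rule the_equality)
  show "\<forall>\<theta>'. ls_loss Sig mu1 mu2 u (k *\<^sub>R b) \<le> ls_loss Sig mu1 mu2 u \<theta>'"
  proof
    fix \<theta>' :: "real^'p"
    have "ls_loss Sig mu1 mu2 u (k *\<^sub>R b + (\<theta>' - k *\<^sub>R b)) = ls_loss Sig mu1 mu2 u (k *\<^sub>R b)
      + (\<theta>' - k *\<^sub>R b) \<bullet> (Sig u *v (\<theta>' - k *\<^sub>R b)) + ((\<theta>' - k *\<^sub>R b) \<bullet> delta mu1 mu2 u)\<^sup>2 / 4"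
      by (rule ls_loss_expand[where Sig=Sig and u=u, OF pd Sb k])
    moreover have "0 \<le> (\<theta>' - k *\<^sub>R b) \<bullet> (Sig u *v (\<theta>' - k *\<^sub>R b))" by (rule pd_pos1[OF pd])
    ultimately show "ls_loss Sig mu1 mu2 u (k *\<^sub>R b) \<le> ls_loss Sig mu1 mu2 u \<theta>'" by simp
  qed
next
  fix \<theta>1 assume "\<forall>\<theta>'. ls_loss Sig mu1 mu2 u \<theta>1 \<le> ls_loss Sig mu1 mu2 u \<theta>'"
  then have le: "ls_loss Sig mu1 mu2 u \<theta>1 \<le> ls_loss Sig mu1 mu2 u (k *\<^sub>R b)" by blast
  have "ls_loss Sig mu1 mu2 u (k *\<^sub>R b + (\<theta>1 - k *\<^sub>R b)) = ls_loss Sig mu1 mu2 u (k *\<^sub>R b)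
      + (\<theta>1 - k *\<^sub>R b) \<bullet> (Sig u *v (\<theta>1 - k *\<^sub>R b)) + ((\<theta>1 - k *\<^sub>R b) \<bullet> delta mu1 mu2 u)\<^sup>2 / 4"
    by (rule ls_loss_expand[where Sig=Sig and u=u, OF pd Sb k])
  then have "ls_loss Sig mu1 mu2 u \<theta>1 = ls_loss Sig mu1 mu2 u (k *\<^sub>R b)
      + (\<theta>1 - k *\<^sub>R b) \<bullet> (Sig u *v (\<theta>1 - k *\<^sub>R b)) + ((\<theta>1 - k *\<^sub>R b) \<bullet> delta mu1 mu2 u)\<^sup>2 / 4"
    by simp
  moreover have "0 \<le> ((\<theta>1 - k *\<^sub>R b) \<bullet> delta mu1 mu2 u)\<^sup>2 / 4" by simp
  ultimately have "(\<theta>1 - k *\<^sub>R b) \<bullet> (Sig u *v (\<theta>1 - k *\<^sub>R b)) \<le> 0" using le by linarith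
  then have "\<theta>1 - k *\<^sub>R b = 0" using pd_pos2[OF pd, of "\<theta>1 - k *\<^sub>R b"] by force
  then show "\<theta>1 = k *\<^sub>R b" by simp
qed

lemma step:
  fixes Sig :: "real \<Rightarrow> real^'p^'p" and mu1 mu2 :: "real \<Rightarrow> real^'p" and m \<theta> :: "real^'p"
  assumes pd: "pos_def (Sig u)" and D0: "0 < D0" "D0 \<le> Delta Sig mu1 mu2 u"
    and M1: "1 \<le> M" and MS: "onorm (\<lambda>x. Sig u *v x) \<le> M"
    and Dl: "Dl = Delta Sig mu1 mu2 u" and bdef: "b = beta_star Sig mu1 mu2 u" and k: "k = 1 / (4 + Dl\<^sup>2)"
    and hsmall: "norm (\<theta> - theta_star Sig mu1 mu2 u) \<le> min 1 (k\<^sup>2 * Dl\<^sup>2 / (16 * M))"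
    and wsmall: "norm (m - mid mu1 mu2 u) \<le> min 1 (k * Dl\<^sup>2 / (16 * (k * norm b + 1)))"
  shows "\<bar>plugin_risk Sig mu1 mu2 m \<theta> u - oracle_risk Sig mu1 mu2 u\<bar>
     \<le> 300000 * M / D0 * ((norm (\<theta> - theta_star Sig mu1 mu2 u))\<^sup>2 + \<bar>(m - mid mu1 mu2 u) \<bullet> b\<bar>\<^sup>2)"
proof -
  define S where "S = Sig u"
  define dl where "dl = delta mu1 mu2 u"
  have Sb: "S *v b = dl" unfolding S_def dl_def bdef beta_star_def using pd_inv[OF pd] .
  define q0 where "q0 = dl \<bullet> b"
  have q0': "q0 = b \<bullet> (S *v b)" unfolding q0_def using Sb by (simp add: inner_commute)
  have q0nn: "0 \<le> q0" unfolding q0' S_def by (rule pd_pos1[OF pd])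
  have Dlq: "Dl = sqrt q0" unfolding Dl Delta_def q0_def dl_def bdef beta_star_def ..
  have Dl2: "Dl\<^sup>2 = q0" using Dlq q0nn by simp
  have Dlpos: "0 < Dl" using D0 Dl by linarith
  have q4: "0 < 4 + Dl\<^sup>2" by (simp add: add_pos_nonneg)
  have kpos: "0 < k" unfolding k using q4 by simp
  have kk: "k * (4 + delta mu1 mu2 u \<bullet> b) = 1" unfolding dl_def[symmetric] q0_def[symmetric] Dl2[symmetric] k
    using q4 by simp
  have ts: "theta_star Sig mu1 mu2 u = k *\<^sub>R b"
    by (rule theta_star_eq[where Sig=Sig and u=u, OF pd _ kk]) (use Sb S_def dl_def in simp)
  define h where "h = \<theta> - k *\<^sub>R b"
  have th: "\<theta> = k *\<^sub>R b + h" unfolding h_def by simp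
  define w where "w = m - mid mu1 mu2 u"
  define e where "e = w \<bullet> b"
  define H where "H = (norm h)\<^sup>2"
  define HS where "HS = h \<bullet> (S *v h)"
  define q where "q = h \<bullet> dl"
  have H0: "0 \<le> H" unfolding H_def by simp
  have HS0: "0 \<le> HS" unfolding HS_def S_def by (rule pd_pos1[OF pd])
  have h1: "norm h \<le> 1" and h2: "norm h \<le> k\<^sup>2 * Dl\<^sup>2 / (16 * M)" using hsmall ts h_def by auto
  have HleH: "H \<le> norm h" unfolding H_def using h1 by (simp add: power2_eq_square mult_left_le_one_le)
  have hs1: "HS \<le> M * H"
  proof -
    have "HS \<le> onorm (\<lambda>x. S *v x) * H" unfolding HS_def H_def by (rule pd_bound)
    also have "\<dots> \<le> M * H" using MS H0 unfolding S_def by (rule mult_right_mono)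
    finally show ?thesis .
  qed
  have MH: "M * H \<le> k\<^sup>2 * Dl\<^sup>2 / 16"
  proof -
    have "M * H \<le> M * norm h" using HleH M1 by simp
    also have "\<dots> \<le> M * (k\<^sup>2 * Dl\<^sup>2 / (16 * M))" using h2 M1 by (intro mult_left_mono) auto
    also have "\<dots> = k\<^sup>2 * Dl\<^sup>2 / 16" using M1 by simp
    finally show ?thesis .
  qed
  have HSsmall: "HS \<le> k\<^sup>2 * Dl\<^sup>2 / 16" using hs1 MH by linarith
  have bh: "b \<bullet> (S *v h) = q" unfolding q_def using pd_sym[OF pd, of b h] Sb S_def by simp
  have CS: "q\<^sup>2 \<le> Dl\<^sup>2 * HS" using pd_CS[OF pd, of b h] bh Sb unfolding HS_def Dl2 q0' S_def by simp
  have qabs: "\<bar>q\<bar> \<le> k * Dl\<^sup>2 / 4"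
  proof -
    have "q\<^sup>2 \<le> Dl\<^sup>2 * (k\<^sup>2 * Dl\<^sup>2 / 16)" using CS HSsmall by (meson order_trans mult_left_mono zero_le_power2)
    also have "\<dots> = (k * Dl\<^sup>2 / 4)\<^sup>2" by (simp add: power2_eq_square)
    finally show ?thesis using kpos by (simp add: power2_le_iff_abs_le)
  qed
  have tnn: "0 \<le> \<theta> \<bullet> (S *v \<theta>)" unfolding S_def by (rule pd_pos1[OF pd])
  define s where "s = sqrt (\<theta> \<bullet> (S *v \<theta>))"
  have tt0: "\<theta> \<bullet> (S *v \<theta>) = k\<^sup>2 * q0 + 2 * k * q + HS"
  proof -
    have hb: "h \<bullet> (S *v b) = q" using Sb q_def by simp
    show ?thesis unfolding th HS_def
      using bh hb q0'
      by (simp add: matrix_vector_right_distrib matrix_vector_mult_scaleR inner_add_left inner_add_right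
          power2_eq_square algebra_simps)
  qed
  have s2: "s\<^sup>2 = k\<^sup>2 * Dl\<^sup>2 + 2 * k * q + HS"
    unfolding s_def using tnn tt0 Dl2 by simp
  have ss: "k\<^sup>2 * Dl\<^sup>2 / 2 \<le> s\<^sup>2"
  proof -
    have "2 * k * \<bar>q\<bar> \<le> 2 * k * (k * Dl\<^sup>2 / 4)" using qabs kpos by simp
    moreover have "- (2 * k * \<bar>q\<bar>) \<le> 2 * k * q" using kpos by (simp add: abs_if)
    moreover have "2 * k * (k * Dl\<^sup>2 / 4) = k\<^sup>2 * Dl\<^sup>2 / 2" by (simp add: power2_eq_square)
    ultimately show ?thesis using s2 HS0 by linarith
  qed
  have kD: "0 < k\<^sup>2 * Dl\<^sup>2" using kpos Dlpos by simp
  have s0: "0 < s"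
  proof -
    have "0 < s\<^sup>2" using ss kD by linarith
    then show ?thesis unfolding s_def using tnn by simp
  qed
  have hs2: "HS \<le> s\<^sup>2 / 8" using HSsmall ss by linarith
  have sge: "k * Dl / 2 \<le> s"
  proof -
    have "(k * Dl / 2)\<^sup>2 = k\<^sup>2 * Dl\<^sup>2 / 4" by (simp add: power2_eq_square)
    then have "(k * Dl / 2)\<^sup>2 \<le> s\<^sup>2" using ss kD by linarith
    then show ?thesis using s0 by (simp add: power2_le_iff_abs_le)
  qed
  define p where "p = dl \<bullet> \<theta>"
  have pdef: "p = k * Dl\<^sup>2 + q" unfolding p_def th q_def Dl2 q0_def by (simp add: inner_add_right inner_commute)
  have ppos: "0 < p"
  proof -
    have "k * Dl\<^sup>2 / 4 < k * Dl\<^sup>2" using kD kpos Dlpos by simp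
    then show ?thesis using pdef qabs by linarith
  qed
  have key: "(Dl * s)\<^sup>2 - p\<^sup>2 = Dl\<^sup>2 * HS - q\<^sup>2"
    unfolding pdef power_mult_distrib s2 by (simp add: power2_eq_square algebra_simps)
  have Dsp: "p \<le> Dl * s"
  proof -
    have "p\<^sup>2 \<le> (Dl * s)\<^sup>2" using key CS by linarith
    then show ?thesis using Dlpos s0 ppos by (simp add: power2_le_iff_abs_le)
  qed
  have Dsp2: "Dl * s - p \<le> Dl * HS / s"
  proof -
    have "0 < Dl * s" using Dlpos s0 by simp
    then have pos: "0 < Dl * s + p" using ppos by linarith
    have "(Dl * s - p) * (Dl * s + p) = Dl\<^sup>2 * HS - q\<^sup>2" using key by (simp add: power2_eq_square algebra_simps)
    also have "\<dots> \<le> Dl\<^sup>2 * HS" by simp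
    finally have "(Dl * s - p) * (Dl * s + p) \<le> Dl\<^sup>2 * HS" .
    moreover have "(Dl * s - p) * (Dl * s) \<le> (Dl * s - p) * (Dl * s + p)"
      using Dsp ppos by (intro mult_left_mono) auto
    ultimately have "(Dl * s - p) * (Dl * s) \<le> Dl\<^sup>2 * HS" by linarith
    then have "(Dl * s - p) \<le> Dl\<^sup>2 * HS / (Dl * s)" using Dlpos s0 by (simp add: le_divide_eq)
    also have "\<dots> = Dl * HS / s" using Dlpos by (simp add: power2_eq_square)
    finally show ?thesis .
  qed
  define d where "d = p / (2 * s)"
  have dl1: "0 \<le> Dl/2 - d" using Dsp s0 unfolding d_def by (simp add: field_simps)
  have du: "Dl/2 - d \<le> Dl * HS / (2 * s\<^sup>2)"
  proof -
    have "Dl/2 - d = (Dl * s - p) / (2 * s)" using s0 unfolding d_def by (simp add: field_simps)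
    also have "\<dots> \<le> (Dl * HS / s) / (2 * s)" using Dsp2 s0 by (intro divide_right_mono) auto
    also have "\<dots> = Dl * HS / (2 * s\<^sup>2)" by (simp add: power2_eq_square)
    finally show ?thesis .
  qed
  define T where "T = w \<bullet> \<theta>"
  define t where "t = T / s"
  have Tdef: "T = k * e + w \<bullet> h" unfolding T_def th e_def by (simp add: inner_add_right)
  have w1: "norm w \<le> 1" and w2: "norm w \<le> k * Dl\<^sup>2 / (16 * (k * norm b + 1))" using wsmall w_def by auto
  have wh: "\<bar>w \<bullet> h\<bar> \<le> norm h"
  proof -
    have "\<bar>w \<bullet> h\<bar> \<le> norm w * norm h" by (rule Cauchy_Schwarz_ineq2)
    also have "\<dots> \<le> 1 * norm h" using w1 by (intro mult_right_mono) auto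
    finally show ?thesis by simp
  qed
  have wh2: "(w \<bullet> h)\<^sup>2 \<le> H" unfolding H_def using wh by (simp add: power2_le_iff_abs_le abs_le_square_iff)
  have T2: "T\<^sup>2 \<le> 2 * (k\<^sup>2 * e\<^sup>2 + H)"
  proof -
    have "T\<^sup>2 \<le> 2 * ((k * e)\<^sup>2 + (w \<bullet> h)\<^sup>2)" unfolding Tdef
      using sum_squares_bound[of "k * e" "w \<bullet> h"] by (simp add: power2_eq_square algebra_simps)
    then show ?thesis using wh2 by (simp add: power_mult_distrib)
  qed
  have tt: "t\<^sup>2 \<le> 2 * (k\<^sup>2 * e\<^sup>2 + H) / s\<^sup>2"
    unfolding t_def power_divide using T2 s0 by (intro divide_right_mono) auto
  have Tabs: "\<bar>T\<bar> \<le> k * Dl\<^sup>2 / 16"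
  proof -
    have "\<bar>e\<bar> \<le> norm w * norm b" unfolding e_def by (rule Cauchy_Schwarz_ineq2)
    then have ke: "k * \<bar>e\<bar> \<le> k * (norm w * norm b)" using kpos by (intro mult_left_mono) auto
    have wh': "\<bar>w \<bullet> h\<bar> \<le> norm w * norm h" by (rule Cauchy_Schwarz_ineq2)
    have "\<bar>T\<bar> \<le> \<bar>k * e\<bar> + \<bar>w \<bullet> h\<bar>" unfolding Tdef by (rule abs_triangle_ineq)
    also have "\<bar>k * e\<bar> = k * \<bar>e\<bar>" using kpos by (simp add: abs_mult)
    finally have "\<bar>T\<bar> \<le> k * (norm w * norm b) + norm w * norm h" using ke wh' by linarith
    also have "\<dots> \<le> k * (norm w * norm b) + norm w * 1" using h1 by (intro add_left_mono mult_left_mono) auto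
    also have "\<dots> = norm w * (k * norm b + 1)" by (simp add: algebra_simps)
    also have "\<dots> \<le> (k * Dl\<^sup>2 / (16 * (k * norm b + 1))) * (k * norm b + 1)"
      using w2 kpos by (intro mult_right_mono) auto
    also have "\<dots> = k * Dl\<^sup>2 / 16"
    proof -
      have "0 < k * norm b + 1" using kpos by (simp add: add_nonneg_pos)
      then have "k * norm b + 1 \<noteq> 0" by simp
      then show ?thesis by (simp add: field_simps)
    qed
    finally show ?thesis .
  qed
  have ta: "\<bar>t\<bar> \<le> Dl / 8"
  proof -
    have "\<bar>t\<bar> = \<bar>T\<bar> / s" unfolding t_def using s0 by simp
    also have "\<dots> \<le> (k * Dl\<^sup>2 / 16) / s" using Tabs s0 by (intro divide_right_mono) auto
    also have "\<dots> \<le> (k * Dl\<^sup>2 / 16) / (k * Dl / 2)"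
      using sge kpos Dlpos s0 by (intro divide_left_mono) auto
    also have "\<dots> = Dl / 8" using kpos Dlpos by (simp add: power2_eq_square field_simps)
    finally show ?thesis .
  qed
  have a1: "(m - mu1 u) \<bullet> \<theta> / s = t - d"
  proof -
    have "m - mu1 u = w - (1/2) *\<^sub>R dl" unfolding w_def dl_def mid_def delta_def
      by (simp add: vec_eq_iff algebra_simps)
    then have "(m - mu1 u) \<bullet> \<theta> = T - p / 2" unfolding T_def p_def by (simp add: inner_diff_left)
    then show ?thesis unfolding t_def d_def using s0 by (simp add: field_simps)
  qed
  have a2: "(m - mu2 u) \<bullet> \<theta> / s = t + d"
  proof -
    have "m - mu2 u = w + (1/2) *\<^sub>R dl" unfolding w_def dl_def mid_def delta_def
      by (simp add: vec_eq_iff algebra_simps)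
    then have "(m - mu2 u) \<bullet> \<theta> = T + p / 2" unfolding T_def p_def by (simp add: inner_add_left)
    then show ?thesis unfolding t_def d_def using s0 by (simp add: field_simps)
  qed
  have PR: "plugin_risk Sig mu1 mu2 m \<theta> u = 1/2 * Phi (t - d) + 1/2 * Phi (- t - d)"
  proof -
    have "Phibar (t + d) = Phi (- t - d)" unfolding Phibar_def using Phi_sym[of "t + d"] by simp
    then show ?thesis unfolding plugin_risk_def Let_def S_def[symmetric] s_def[symmetric] a1 a2 by simp
  qed
  have OR: "oracle_risk Sig mu1 mu2 u = Phi (- Dl / 2)" unfolding oracle_risk_def Dl by simp
  have C: "\<bar>1/2 * Phi (t - d) + 1/2 * Phi (- t - d) - Phi (- Dl/2)\<bar> \<le> 300000 * M / D0 * (H + e\<^sup>2)"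
    by (rule core[OF D0(1) _ M1 k s0 ss dl1 du hs1 hs2 tt ta H0]) (use D0 Dl in simp)
  show ?thesis
    using C unfolding PR OR H_def e_def w_def h_def ts by simp
qed

lemma Delta_nonneg:
  fixes Sig :: "real \<Rightarrow> real^'p^'p"
  assumes pd: "pos_def (Sig u)" shows "0 \<le> Delta Sig mu1 mu2 u"
proof -
  define b where "b = matrix_inv (Sig u) *v delta mu1 mu2 u"
  have Sb: "Sig u *v b = delta mu1 mu2 u" unfolding b_def by (rule pd_inv[OF pd])
  have "delta mu1 mu2 u \<bullet> b = b \<bullet> (Sig u *v b)" using Sb by (simp add: inner_commute)
  also have "\<dots> \<ge> 0" by (rule pd_pos1[OF pd])
  finally show ?thesis unfolding Delta_def b_def[symmetric] by simp
qed

theorem proposition1: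
  fixes mu1 mu2 :: "real \<Rightarrow> real^'p"
    and Sig :: "real \<Rightarrow> real^'p^'p"
    and muhat1 muhat2 thetahat :: "nat \<Rightarrow> real \<Rightarrow> real^'p"
  assumes "bdd_above ((\<lambda>u. onorm (\<lambda>x. Sig u *v x)) ` {0..1})"
    and "\<forall>u\<in>{0..1}. pos_def (Sig u)"
    and "(INF u\<in>{0..1}. Delta Sig mu1 mu2 u) > 0"
    and "\<forall>u\<in>{0..1}. (\<lambda>n. norm (muhat1 n u - mu1 u)) \<longlonglongrightarrow> 0"
    and "\<forall>u\<in>{0..1}. (\<lambda>n. norm (muhat2 n u - mu2 u)) \<longlonglongrightarrow> 0"
    and "\<forall>u\<in>{0..1}. (\<lambda>n. norm (thetahat n u - theta_star Sig mu1 mu2 u)) \<longlonglongrightarrow> 0"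
  shows "\<exists>C. \<forall>u\<in>{0..1}. \<forall>\<^sub>F n in sequentially.
           \<bar>plugin_risk Sig mu1 mu2 ((1/2) *\<^sub>R (muhat1 n u + muhat2 n u)) (thetahat n u) u
              - oracle_risk Sig mu1 mu2 u\<bar>
           \<le> C * ((norm (thetahat n u - theta_star Sig mu1 mu2 u))^2
                  + \<bar>((1/2) *\<^sub>R (muhat1 n u + muhat2 n u) - mid mu1 mu2 u) \<bullet> beta_star Sig mu1 mu2 u\<bar>^2)"
proof -
  obtain B where B: "\<And>u. u \<in> {0..1} \<Longrightarrow> onorm (\<lambda>x. Sig u *v x) \<le> B"
    using assms(1) unfolding bdd_above_def by (metis atLeastAtMost_iff image_eqI)
  define M where "M = max 1 B"
  have M1: "1 \<le> M" unfolding M_def by simp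
  define D0 where "D0 = (INF u\<in>{0..1}. Delta Sig mu1 mu2 u)"
  have D0pos: "0 < D0" using assms(3) unfolding D0_def .
  have bddb: "bdd_below ((\<lambda>u. Delta Sig mu1 mu2 u) ` {0..1})"
    using Delta_nonneg[of Sig _ mu1 mu2] assms(2) by (intro bdd_belowI[of _ 0]) auto
  have DD0: "D0 \<le> Delta Sig mu1 mu2 u" if "u \<in> {0..1}" for u
    unfolding D0_def by (rule cINF_lower[OF bddb that])
  show ?thesis
  proof (intro exI ballI)
    fix u :: real assume u: "u \<in> {0..1}"
    define Dl where "Dl = Delta Sig mu1 mu2 u"
    define b where "b = beta_star Sig mu1 mu2 u"
    define k where "k = 1 / (4 + Dl\<^sup>2)"
    define r1 where "r1 = min 1 (k\<^sup>2 * Dl\<^sup>2 / (16 * M))"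
    define r2 where "r2 = min 1 (k * Dl\<^sup>2 / (16 * (k * norm b + 1)))"
    have Dlpos: "0 < Dl" using DD0[OF u] D0pos unfolding Dl_def by linarith
    have q4: "0 < 4 + Dl\<^sup>2" by (simp add: add_pos_nonneg)
    have kpos: "0 < k" unfolding k_def using q4 by simp
    have r1pos: "0 < r1" unfolding r1_def using kpos Dlpos M1 by simp
    have r2pos: "0 < r2" unfolding r2_def using kpos Dlpos by (simp add: add_nonneg_pos)
    have e1: "\<forall>\<^sub>F n in sequentially. norm (thetahat n u - theta_star Sig mu1 mu2 u) < r1"
      using order_tendstoD(2)[OF assms(6)[rule_format, OF u] r1pos] .
    have e2: "\<forall>\<^sub>F n in sequentially. norm (muhat1 n u - mu1 u) < r2"
      using order_tendstoD(2)[OF assms(4)[rule_format, OF u] r2pos] .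
    have e3: "\<forall>\<^sub>F n in sequentially. norm (muhat2 n u - mu2 u) < r2"
      using order_tendstoD(2)[OF assms(5)[rule_format, OF u] r2pos] .
    show "\<forall>\<^sub>F n in sequentially.
           \<bar>plugin_risk Sig mu1 mu2 ((1/2) *\<^sub>R (muhat1 n u + muhat2 n u)) (thetahat n u) u
              - oracle_risk Sig mu1 mu2 u\<bar>
           \<le> 300000 * M / D0 * ((norm (thetahat n u - theta_star Sig mu1 mu2 u))^2
                  + \<bar>((1/2) *\<^sub>R (muhat1 n u + muhat2 n u) - mid mu1 mu2 u) \<bullet> beta_star Sig mu1 mu2 u\<bar>^2)"
      using e1 e2 e3
    proof eventually_elim
      case (elim n)
      have mm: "(1/2) *\<^sub>R (muhat1 n u + muhat2 n u) - mid mu1 mu2 u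
          = (1/2) *\<^sub>R (muhat1 n u - mu1 u) + (1/2) *\<^sub>R (muhat2 n u - mu2 u)"
        unfolding mid_def by (simp add: vec_eq_iff algebra_simps)
      have "norm ((1/2) *\<^sub>R (muhat1 n u + muhat2 n u) - mid mu1 mu2 u)
          \<le> norm ((1/2) *\<^sub>R (muhat1 n u - mu1 u)) + norm ((1/2) *\<^sub>R (muhat2 n u - mu2 u))"
        unfolding mm by (rule norm_triangle_ineq)
      also have "\<dots> = 1/2 * norm (muhat1 n u - mu1 u) + 1/2 * norm (muhat2 n u - mu2 u)" by simp
      finally have wn: "norm ((1/2) *\<^sub>R (muhat1 n u + muhat2 n u) - mid mu1 mu2 u) \<le> r2"
        using elim by linarith
      show ?case
        unfolding b_def[symmetric]
        by (rule step[OF assms(2)[rule_format, OF u] D0pos DD0[OF u] M1 _ Dl_def b_def k_def])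
          (use B[OF u] M_def elim(1) wn r1_def r2_def in auto)
    qed
  qed
qed

end
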